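(* Let $R(H)$ be the number of integer solutions $(x,a,b,c,d)\in[-2H,2H]\times[-H,H]^4$ to the equation \[ x^3-bx^2+(ac-4d)x-(a^2d-4bd+c^2)=0. \] Then $R(H)\ll H^2(\log H)^2$ as $H\to\infty$. *)

theory Defs
  imports Complex_Main "HOL-Library.Landau_Symbols"
begin

definition R :: "nat \<Rightarrow> nat" where
  "R H = card {t :: int \<times> int \<times> int \<times> int \<times> int.
      case t of (x, a, b, c, d) \<Rightarrow>
      \<bar>x\<bar> \<le> 2 * int H \<and> \<bar>a\<bar> \<le> int H \<and> \<bar>b\<bar> \<le> int H \<and> \<bar>c\<bar> \<le> int H \<and> \<bar>d\<bar> \<le> int H \<and>
      x^3 - b * x^2 + (a * c - 4 * d) * x - (a^2 * d - 4 * b * d + c^2) = 0}"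

end

theory Submission
  imports Defs "HOL-Analysis.Harmonic_Numbers"
begin


lemma sq_card:
  fixes S :: "int set" and A B :: real
  assumes fin: "finite S" and A: "A > 0" and B: "B \<ge> 0"
    and pw: "\<And>y z. y \<in> S \<Longrightarrow> z \<in> S \<Longrightarrow> real_of_int ((y - z)^2) * A \<le> B"
  shows "(real (card S))^2 * A \<le> 2*B + 2*A"
proof (cases "S = {}")
  case True then show ?thesis using A B by simp
next
  case False
  define m where "m = Min S"
  define M where "M = Max S"
  have mS: "m \<in> S" using False fin by (simp add: m_def)
  have MS: "M \<in> S" using False fin by (simp add: M_def)
  have sub: "S \<subseteq> {m..M}" using fin by (auto simp: m_def M_def)
  have "card S \<le> card {m..M}" using sub by (intro card_mono) auto
  also have "card {m..M} = nat (M - m + 1)" by simp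
  finally have c0: "card S \<le> nat (M - m + 1)" .
  have mM: "m \<le> M" using sub MS by auto
  have c: "real (card S) \<le> real_of_int (M - m) + 1"
  proof -
    have "real (card S) \<le> real (nat (M - m + 1))" using c0 by linarith
    also have "\<dots> = real_of_int (M - m) + 1" using mM by simp
    finally show ?thesis .
  qed
  have D0: "0 \<le> real_of_int (M - m)" using sub MS by auto
  have DB: "real_of_int (M - m)^2 * A \<le> B" using pw[OF MS mS] by simp
  have "(real (card S))^2 \<le> (real_of_int (M - m) + 1)^2"
    using c by (intro power_mono) auto
  also have "\<dots> \<le> 2 * real_of_int (M - m)^2 + 2"
  proof -
    have "0 \<le> (real_of_int (M - m) - 1)^2" by simp
    then show ?thesis by (simp add: power2_eq_square algebra_simps)
  qed
  finally have "(real (card S))^2 * A \<le> (2 * real_of_int (M - m)^2 + 2) * A"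
    using A by (intro mult_right_mono) auto
  also have "\<dots> \<le> 2*B + 2*A" using DB A by (simp add: algebra_simps)
  finally show ?thesis .
qed


lemma pos_window:
  fixes A h :: int
  assumes A: "0 < A" and h: "0 \<le> h" and Ah: "2*h \<le> A"
  shows "(real (card {y::int. 0 < y \<and> \<bar>y^2 - A\<bar> \<le> h}))^2 * real_of_int A \<le> 8 * real_of_int h^2 + 2 * real_of_int A"
proof -
  let ?S = "{y::int. 0 < y \<and> \<bar>y^2 - A\<bar> \<le> h}"
  have sub: "?S \<subseteq> {0..A+h}"
  proof
    fix y assume "y \<in> ?S"
    then have "0 < y" "y^2 \<le> A + h" by auto
    moreover have "y \<le> y^2" using \<open>0 < y\<close> by (simp add: power2_eq_square)
    ultimately show "y \<in> {0..A+h}" by auto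
  qed
  have fin: "finite ?S" using finite_subset[OF sub] by simp
  have pw: "real_of_int ((y - z)^2) * real_of_int A \<le> real_of_int (4*h^2)" if "y \<in> ?S" "z \<in> ?S" for y z
  proof -
    from that have y: "0 < y" "\<bar>y^2 - A\<bar> \<le> h" and z: "0 < z" "\<bar>z^2 - A\<bar> \<le> h" by auto
    have "A \<le> (y + z)^2"
    proof -
      have "(y+z)^2 = y^2 + z^2 + 2*y*z" by (simp add: power2_eq_square algebra_simps)
      moreover have "0 \<le> 2*y*z" using y z by simp
      ultimately show ?thesis using y z Ah by linarith
    qed
    then have "(y - z)^2 * A \<le> (y - z)^2 * (y+z)^2" by (intro mult_left_mono) auto
    also have "\<dots> = (y^2 - z^2)^2" by (simp add: power2_eq_square algebra_simps)
    also have "\<dots> \<le> (2*h)^2"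
    proof -
      have "\<bar>y^2 - z^2\<bar> \<le> 2*h" using y z by linarith
      then show ?thesis by (metis abs_le_square_iff power2_abs abs_of_nonneg h mult_nonneg_nonneg zero_le_numeral)
    qed
    finally have "(y - z)^2 * A \<le> 4*h^2" by (simp add: power2_eq_square)
    then show ?thesis by (metis of_int_le_iff of_int_mult)
  qed
  have "(real (card ?S))^2 * real_of_int A \<le> 2 * real_of_int (4*h^2) + 2 * real_of_int A"
    by (rule sq_card[OF fin]) (use A h pw in auto)
  then show ?thesis by simp
qed

lemma full_window:
  fixes A h :: int
  assumes A: "0 < A" and h: "0 \<le> h" and Ah: "2*h \<le> A"
  shows "(real (card {y::int. \<bar>y^2 - A\<bar> \<le> h}))^2 * real_of_int A \<le> 32 * real_of_int h^2 + 8 * real_of_int A"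
proof -
  let ?P = "{y::int. 0 < y \<and> \<bar>y^2 - A\<bar> \<le> h}"
  let ?S = "{y::int. \<bar>y^2 - A\<bar> \<le> h}"
  have eq: "?S \<subseteq> ?P \<union> uminus ` ?P"
  proof
    fix y assume "y \<in> ?S"
    then have y: "\<bar>y^2 - A\<bar> \<le> h" by simp
    have "y \<noteq> 0" using y A Ah h by (cases "y = 0") auto
    show "y \<in> ?P \<union> uminus ` ?P"
    proof (cases "0 < y")
      case True then show ?thesis using y by auto
    next
      case False
      then have "-y \<in> ?P" using y \<open>y \<noteq> 0\<close> by simp
      then have "- (-y) \<in> uminus ` ?P" by blast
      then show ?thesis by simp
    qed
  qed
  have subP: "?P \<subseteq> {0..A+h}"
  proof
    fix y assume "y \<in> ?P"
    then have "0 < y" "y^2 \<le> A + h" by auto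
    moreover have "y \<le> y^2" using \<open>0 < y\<close> by (simp add: power2_eq_square)
    ultimately show "y \<in> {0..A+h}" by auto
  qed
  have finP: "finite ?P" using finite_subset[OF subP] by simp
  have "card ?S \<le> card (?P \<union> uminus ` ?P)" using eq finP by (intro card_mono) auto
  also have "\<dots> \<le> card ?P + card (uminus ` ?P)" by (rule card_Un_le)
  also have "\<dots> \<le> 2 * card ?P" using card_image_le[OF finP, of uminus] by simp
  finally have c: "real (card ?S) \<le> 2 * real (card ?P)" by linarith
  have "(real (card ?S))^2 \<le> (2 * real (card ?P))^2" using c by (intro power_mono) auto
  then have "(real (card ?S))^2 * real_of_int A \<le> 4 * ((real (card ?P))^2 * real_of_int A)"
    using A by (simp add: power_mult_distrib mult_right_mono)
  also have "\<dots> \<le> 4 * (8 * real_of_int h^2 + 2 * real_of_int A)"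
    using pos_window[OF A h Ah] by (intro mult_left_mono) auto
  finally show ?thesis by simp
qed

lemma lin_window:
  fixes y W k :: int and A :: real
  assumes y: "y \<noteq> 0" and A: "0 < A" and Ay: "A \<le> 2 * real_of_int y^2" and k: "0 \<le> k"
  shows "(real (card {z::int. \<bar>y*z - W\<bar> \<le> k}))^2 * A \<le> 16 * real_of_int k^2 + 2 * A"
proof -
  let ?S = "{z::int. \<bar>y*z - W\<bar> \<le> k}"
  have sub: "?S \<subseteq> {-(\<bar>W\<bar>+k)..\<bar>W\<bar>+k}"
  proof
    fix z assume "z \<in> ?S"
    then have "\<bar>y*z - W\<bar> \<le> k" by simp
    moreover have "\<bar>z\<bar> \<le> \<bar>y*z\<bar>"
    proof -
      have "1 \<le> \<bar>y\<bar>" using y by linarith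
      then have "1 * \<bar>z\<bar> \<le> \<bar>y\<bar> * \<bar>z\<bar>" by (intro mult_right_mono) auto
      then show ?thesis by (simp add: abs_mult)
    qed
    ultimately show "z \<in> {-(\<bar>W\<bar>+k)..\<bar>W\<bar>+k}" by auto
  qed
  have fin: "finite ?S" using finite_subset[OF sub] by simp
  have pw: "real_of_int ((z - z')^2) * A \<le> real_of_int (8*k^2)" if "z \<in> ?S" "z' \<in> ?S" for z z'
  proof -
    from that have a: "\<bar>y*z - W\<bar> \<le> k" "\<bar>y*z' - W\<bar> \<le> k" by auto
    have "\<bar>y*(z - z')\<bar> \<le> 2*k" using a by (simp add: algebra_simps)
    then have "(y*(z-z'))^2 \<le> (2*k)^2" by (metis abs_le_square_iff power2_abs abs_of_nonneg k mult_nonneg_nonneg zero_le_numeral)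
    then have "real_of_int ((y*(z-z'))^2) \<le> real_of_int ((2*k)^2)" by (simp only: of_int_le_iff)
    then have i: "real_of_int y^2 * real_of_int ((z-z')^2) \<le> 4 * real_of_int k^2"
      by (simp only: of_int_power of_int_mult power_mult_distrib of_int_numeral) simp
    have "real_of_int ((z - z')^2) * A \<le> real_of_int ((z - z')^2) * (2 * real_of_int y^2)"
      using Ay by (intro mult_left_mono) auto
    also have "\<dots> = 2 * (real_of_int y^2 * real_of_int ((z-z')^2))" by simp
    also have "\<dots> \<le> 8 * real_of_int k^2" using i by linarith
    finally show ?thesis by simp
  qed
  have "(real (card ?S))^2 * A \<le> 2 * real_of_int (8*k^2) + 2 * A"
    by (rule sq_card[OF fin]) (use A k pw in auto)
  then show ?thesis by simp
qed


lemma fin_sq: "finite {y::int. \<bar>y^2 - A\<bar> \<le> h}"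
proof -
  have "{y::int. \<bar>y^2 - A\<bar> \<le> h} \<subseteq> {-(\<bar>A\<bar>+\<bar>h\<bar>)..\<bar>A\<bar>+\<bar>h\<bar>}"
  proof
    fix y :: int assume "y \<in> {y::int. \<bar>y^2 - A\<bar> \<le> h}"
    then have "y^2 \<le> \<bar>A\<bar> + \<bar>h\<bar>" by auto
    moreover have "\<bar>y\<bar> \<le> y^2"
    proof (cases "y = 0")
      case True then show ?thesis by simp
    next
      case False
      then have "1 \<le> \<bar>y\<bar>" by linarith
      then have "\<bar>y\<bar> * 1 \<le> \<bar>y\<bar> * \<bar>y\<bar>" by (intro mult_left_mono) auto
      then show ?thesis by (simp add: power2_eq_square abs_mult_self_eq)
    qed
    ultimately show "y \<in> {-(\<bar>A\<bar>+\<bar>h\<bar>)..\<bar>A\<bar>+\<bar>h\<bar>}" by auto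
  qed
  then show ?thesis using finite_subset by blast
qed

lemma fin_lin:
  fixes y :: int assumes y: "y \<noteq> 0" shows "finite {z::int. \<bar>y*z - W\<bar> \<le> k}"
proof -
  have "{z::int. \<bar>y*z - W\<bar> \<le> k} \<subseteq> {-(\<bar>W\<bar>+\<bar>k\<bar>)..\<bar>W\<bar>+\<bar>k\<bar>}"
  proof
    fix z assume "z \<in> {z::int. \<bar>y*z - W\<bar> \<le> k}"
    then have "\<bar>y*z - W\<bar> \<le> k" by simp
    moreover have "\<bar>z\<bar> \<le> \<bar>y*z\<bar>"
    proof -
      have "1 \<le> \<bar>y\<bar>" using y by linarith
      then have "1 * \<bar>z\<bar> \<le> \<bar>y\<bar> * \<bar>z\<bar>" by (intro mult_right_mono) auto
      then show ?thesis by (simp add: abs_mult)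
    qed
    ultimately show "z \<in> {-(\<bar>W\<bar>+\<bar>k\<bar>)..\<bar>W\<bar>+\<bar>k\<bar>}" by auto
  qed
  then show ?thesis using finite_subset by blast
qed

lemma sqrt_amgm: fixes Y Z :: real assumes "0 \<le> Y" "0 \<le> Z" shows "sqrt Y * sqrt Z \<le> (Y + Z)/2"
proof -
  have "2 * sqrt Y * sqrt Z \<le> (sqrt Y)^2 + (sqrt Z)^2" by (rule sum_squares_bound)
  then show ?thesis using assms by simp
qed

lemma count2:
  fixes E :: "(int \<times> int) set" and A h k W :: int
  assumes E: "E \<subseteq> {(y,z). \<bar>y^2 - A\<bar> \<le> h \<and> \<bar>y*z - W\<bar> \<le> k}"
    and A: "0 < A" and h: "0 \<le> h" and Ah: "2*h \<le> A" and k: "0 \<le> k"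
  shows "real (card E) * real_of_int A \<le> 16 * real_of_int h^2 + 8 * real_of_int k^2 + 5 * real_of_int A"
proof -
  define SY where "SY = {y::int. \<bar>y^2 - A\<bar> \<le> h}"
  define SZ where "SZ = (\<lambda>y::int. {z::int. \<bar>y*z - W\<bar> \<le> k})"
  define Y where "Y = (32 * real_of_int h^2 + 8 * real_of_int A) / real_of_int A"
  define Z where "Z = (16 * real_of_int k^2 + 2 * real_of_int A) / real_of_int A"
  have Apos: "0 < real_of_int A" using A by simp
  have Y0: "0 \<le> Y" unfolding Y_def using Apos by (intro divide_nonneg_pos) auto
  have Z0: "0 \<le> Z" unfolding Z_def using Apos by (intro divide_nonneg_pos) auto
  have finY: "finite SY" unfolding SY_def by (rule fin_sq)
  have yne: "y \<noteq> 0" and Ay: "real_of_int A \<le> 2 * real_of_int y^2" if "y \<in> SY" for y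
  proof -
    from that have "\<bar>y^2 - A\<bar> \<le> h" by (simp add: SY_def)
    then have "A \<le> 2 * y^2" using Ah by linarith
    then show "real_of_int A \<le> 2 * real_of_int y^2" by (metis of_int_le_iff of_int_mult of_int_numeral of_int_power)
    show "y \<noteq> 0" using \<open>A \<le> 2 * y^2\<close> A by auto
  qed
  have finZ: "finite (SZ y)" if "y \<in> SY" for y unfolding SZ_def by (rule fin_lin[OF yne[OF that]])
  have cZ: "real (card (SZ y)) \<le> sqrt Z" if "y \<in> SY" for y
  proof (rule real_le_rsqrt)
    have "(real (card (SZ y)))^2 * real_of_int A \<le> 16 * real_of_int k^2 + 2 * real_of_int A"
      unfolding SZ_def by (rule lin_window[OF yne[OF that] Apos Ay[OF that] k])
    then show "(real (card (SZ y)))^2 \<le> Z" unfolding Z_def using Apos by (simp add: pos_le_divide_eq)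
  qed
  have cY: "real (card SY) \<le> sqrt Y"
  proof (rule real_le_rsqrt)
    have "(real (card SY))^2 * real_of_int A \<le> 32 * real_of_int h^2 + 8 * real_of_int A"
      unfolding SY_def by (rule full_window[OF A h Ah])
    then show "(real (card SY))^2 \<le> Y" unfolding Y_def using Apos by (simp add: pos_le_divide_eq)
  qed
  have "E \<subseteq> Sigma SY SZ" using E by (auto simp: SY_def SZ_def)
  then have "card E \<le> card (Sigma SY SZ)" using finY finZ by (intro card_mono) auto
  also have "\<dots> = (\<Sum>y\<in>SY. card (SZ y))" using finY finZ by simp
  finally have "real (card E) \<le> (\<Sum>y\<in>SY. real (card (SZ y)))" by (metis of_nat_le_iff of_nat_sum)
  also have "\<dots> \<le> (\<Sum>y\<in>SY. sqrt Z)" using cZ by (intro sum_mono) auto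
  also have "\<dots> = real (card SY) * sqrt Z" by simp
  also have "\<dots> \<le> sqrt Y * sqrt Z" using cY Z0 by (intro mult_right_mono) auto
  also have "\<dots> \<le> (Y + Z)/2" by (rule sqrt_amgm[OF Y0 Z0])
  finally have "real (card E) * real_of_int A \<le> (Y + Z)/2 * real_of_int A" using Apos by (intro mult_right_mono) auto
  also have "\<dots> = 16 * real_of_int h^2 + 8 * real_of_int k^2 + 5 * real_of_int A"
    unfolding Y_def Z_def using Apos by (simp add: field_simps)
  finally show ?thesis .
qed

lemma count_small:
  fixes E :: "(int \<times> int) set" and L :: int
  assumes E: "E \<subseteq> {(y,z). y^2 \<le> L \<and> z^2 \<le> L}" and L: "0 \<le> L"
  shows "real (card E) \<le> 8 * real_of_int L + 2"
proof -
  define S where "S = {y::int. y^2 \<le> L}"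
  have finS: "finite S"
  proof -
    have "S \<subseteq> {y::int. \<bar>y^2 - 0\<bar> \<le> L}" unfolding S_def by auto
    then show ?thesis using fin_sq finite_subset by blast
  qed
  have pw: "real_of_int ((y - z)^2) * 1 \<le> real_of_int (4*L)" if "y \<in> S" "z \<in> S" for y z
  proof -
    have "(y - z)^2 \<le> 2*y^2 + 2*z^2"
    proof -
      have "0 \<le> (y + z)^2" by simp
      then show ?thesis by (simp add: power2_eq_square algebra_simps)
    qed
    then have "(y - z)^2 \<le> 4*L" using that by (simp add: S_def)
    then show ?thesis by (simp only: of_int_le_iff mult_1_right)
  qed
  have c: "(real (card S))^2 * 1 \<le> 2 * real_of_int (4*L) + 2*1"
    by (rule sq_card[OF finS]) (use pw L in auto)
  have "E \<subseteq> S \<times> S" using E by (auto simp: S_def)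
  then have "card E \<le> card (S \<times> S)" using finS by (intro card_mono) auto
  also have "\<dots> = card S * card S" by (simp add: card_cartesian_product)
  finally have "real (card E) \<le> real (card S) * real (card S)" by (metis of_nat_le_iff of_nat_mult)
  then have "real (card E) \<le> (real (card S))^2" by (simp add: power2_eq_square)
  moreover have "(real (card S))^2 \<le> 8 * real_of_int L + 2" using c by simp
  ultimately show ?thesis by linarith
qed




definition Eset :: "nat \<Rightarrow> int \<Rightarrow> int \<Rightarrow> int \<Rightarrow> int \<Rightarrow> (int \<times> int) set" where
  "Eset H g p q W = {(a,x). \<bar>a^2 + g*p^2 + 4*x\<bar> \<le> 4*int H \<and> \<bar>a\<bar> \<le> int H \<and> \<bar>x\<bar> \<le> 2*int H
      \<and> \<bar>x^2 + g*q^2\<bar> \<le> 4*int H \<and> \<bar>a*x - W\<bar> \<le> 2*int H}"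

lemma sq_le_of_abs_le: fixes a h :: int assumes "\<bar>a\<bar> \<le> h" shows "a^2 \<le> h^2"
proof -
  have "\<bar>a\<bar>^2 \<le> h^2" using assms by (intro power_mono) auto
  then show ?thesis by simp
qed

lemma Eset_bound:
  fixes g p q W :: int
  assumes H: "1 \<le> H" and g: "g \<noteq> 0" and p: "1 \<le> p" and q: "1 \<le> q"
  shows "real (card (Eset H g p q W)) * real_of_int (\<bar>g\<bar> * (max p q)^2) \<le> 6960 * (real H)^2"
proof (cases "Eset H g p q W = {}")
  case True then show ?thesis by simp
next
  case False
  define h where "h = int H"
  have h1: "1 \<le> h" using H by (simp add: h_def)
  have hh: "h \<le> h^2" using h1 by (simp add: power2_eq_square)
  have realh: "real_of_int h = real H" by (simp add: h_def)
  let ?E = "Eset H g p q W"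
  have Emem: "\<bar>a^2 + g*p^2 + 4*x\<bar> \<le> 4*h \<and> \<bar>a\<bar> \<le> h \<and> \<bar>x\<bar> \<le> 2*h
      \<and> \<bar>x^2 + g*q^2\<bar> \<le> 4*h \<and> \<bar>a*x - W\<bar> \<le> 2*h" if "(a,x) \<in> ?E" for a x
    using that by (simp add: Eset_def h_def)
  from False obtain a0 x0 where ax0: "(a0,x0) \<in> ?E" by auto
  note e0 = Emem[OF ax0]
  have a0sq: "a0^2 \<le> h^2" using e0 sq_le_of_abs_le by blast
  have x0sq: "x0^2 \<ge> 0" by simp
  have a0sq': "a0^2 \<ge> 0" by simp
  define P2 where "P2 = p^2"
  define Q2 where "Q2 = q^2"
  have P2pos: "1 \<le> P2" unfolding P2_def by (rule one_le_power[OF p])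
  have Q2pos: "1 \<le> Q2" unfolding Q2_def by (rule one_le_power[OF q])
  have gPx: "\<bar>g\<bar> * P2 = (if g > 0 then g * P2 else - (g * P2))" by (simp add: abs_if)
  have gQx: "\<bar>g\<bar> * Q2 = (if g > 0 then g * Q2 else - (g * Q2))" by (simp add: abs_if)
  have bndP: "\<bar>g\<bar> * P2 \<le> 13 * h^2"
  proof (cases "g > 0")
    case True
    then have "\<bar>g\<bar> * P2 = g * P2" by simp
    then show ?thesis using e0 a0sq hh a0sq' unfolding P2_def by linarith
  next
    case False
    then have "\<bar>g\<bar> * P2 = - (g * P2)" by simp
    then show ?thesis using e0 a0sq hh unfolding P2_def by linarith
  qed
  have bndQ: "\<bar>g\<bar> * Q2 \<le> 13 * h^2"
  proof -
    have "x0^2 \<le> (2*h)^2" using e0 sq_le_of_abs_le by blast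
    then have "x0^2 \<le> 4*h^2" by (simp add: power_mult_distrib)
    show ?thesis
    proof (cases "g > 0")
      case True
      then have "\<bar>g\<bar> * Q2 = g * Q2" by simp
      then show ?thesis using e0 hh x0sq unfolding Q2_def by linarith
    next
      case False
      then have "\<bar>g\<bar> * Q2 = - (g * Q2)" by simp
      then show ?thesis using e0 hh \<open>x0^2 \<le> 4*h^2\<close> unfolding Q2_def by linarith
    qed
  qed
  have maxsq: "(max p q)^2 = max P2 Q2" unfolding P2_def Q2_def using p q
    by (cases "p \<le> q") (simp_all add: max_def power_mono)
  have gabsP: "- (g * P2) \<le> \<bar>g\<bar> * P2" using P2pos by (intro mult_right_mono[of "-g" "\<bar>g\<bar>" P2, simplified]) auto
  have gabsQ: "- (g * Q2) \<le> \<bar>g\<bar> * Q2" using Q2pos by (intro mult_right_mono[of "-g" "\<bar>g\<bar>" Q2, simplified]) auto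
  have hr: "0 \<le> real_of_int h" using h1 by simp
  show ?thesis
  proof (cases "\<bar>g\<bar> * P2 < 24*h \<and> \<bar>g\<bar> * Q2 < 24*h")
    case True
    have sub: "?E \<subseteq> {(y,z). y^2 \<le> 36*h \<and> z^2 \<le> 36*h}"
    proof safe
      fix a x assume "(a,x) \<in> ?E"
      note e = Emem[OF this]
      show "a^2 \<le> 36*h" using e True gabsP unfolding P2_def by linarith
      show "x^2 \<le> 36*h" using e True gabsQ h1 unfolding Q2_def by linarith
    qed
    have c: "real (card ?E) \<le> 8 * real_of_int (36*h) + 2"
      by (rule count_small[OF sub]) (use h1 in simp)
    then have c': "real (card ?E) \<le> 290 * real_of_int h" using h1 by simp
    have "\<bar>g\<bar> * (max p q)^2 \<le> 24 * h" using True maxsq by (simp add: max_def)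
    then have A: "real_of_int (\<bar>g\<bar> * (max p q)^2) \<le> 24 * real_of_int h"
      by (metis of_int_le_iff of_int_mult of_int_numeral)
    have "real (card ?E) * real_of_int (\<bar>g\<bar> * (max p q)^2) \<le> (290 * real_of_int h) * (24 * real_of_int h)"
      using c' A by (intro mult_mono) auto
    also have "\<dots> = 6960 * (real H)^2" using realh by (simp add: power2_eq_square)
    finally show ?thesis .
  next
    case notS: False
    show ?thesis
    proof (cases "q \<le> p")
      case True
      have PQ: "Q2 \<le> P2" unfolding P2_def Q2_def using True q by (intro power_mono) auto
      have "\<bar>g\<bar> * Q2 \<le> \<bar>g\<bar> * P2" using PQ by (intro mult_left_mono) auto
      then have big: "24*h \<le> \<bar>g\<bar> * P2" using notS by linarith
      have gneg: "\<not> g > 0"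
      proof
        assume "g > 0"
        then have "\<bar>g\<bar> * P2 = g * P2" by simp
        then show False using e0 big a0sq' h1 unfolding P2_def by linarith
      qed
      then have Aeq: "\<bar>g\<bar> * P2 = - (g * P2)" by simp
      define A where "A = \<bar>g\<bar> * P2"
      have sub: "?E \<subseteq> {(y,z). \<bar>y^2 - A\<bar> \<le> 12*h \<and> \<bar>y*z - W\<bar> \<le> 2*h}"
      proof safe
        fix a x assume "(a,x) \<in> ?E"
        note e = Emem[OF this]
        show "\<bar>a^2 - A\<bar> \<le> 12*h" using e Aeq unfolding A_def P2_def by linarith
        show "\<bar>a*x - W\<bar> \<le> 2*h" using e by simp
      qed
      have c: "real (card ?E) * real_of_int A \<le> 16 * real_of_int (12*h)^2 + 8 * real_of_int (2*h)^2 + 5 * real_of_int A"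
        by (rule count2[OF sub]) (use big h1 in \<open>auto simp: A_def\<close>)
      have Ab: "real_of_int A \<le> 13 * real_of_int h^2" using bndP unfolding A_def
        by (metis of_int_le_iff of_int_mult of_int_numeral of_int_power)
      have "max p q = p" using True by simp
      then have eqA: "\<bar>g\<bar> * (max p q)^2 = A" by (simp add: A_def P2_def)
      have "real (card ?E) * real_of_int A \<le> 2336 * (real H)^2 + 5 * real_of_int A"
        using c realh by (simp add: power_mult_distrib)
      moreover have "0 \<le> (real H)^2" by simp
      moreover have "real_of_int A \<le> 13 * (real H)^2" using Ab realh by simp
      ultimately show ?thesis unfolding eqA by linarith
    next
      case False
      have PQ: "P2 \<le> Q2" unfolding P2_def Q2_def using False p by (intro power_mono) auto
      have "\<bar>g\<bar> * P2 \<le> \<bar>g\<bar> * Q2" using PQ by (intro mult_left_mono) auto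
      then have big: "24*h \<le> \<bar>g\<bar> * Q2" using notS by linarith
      have gneg: "\<not> g > 0"
      proof
        assume "g > 0"
        then have "\<bar>g\<bar> * Q2 = g * Q2" by simp
        then show False using e0 big x0sq h1 unfolding Q2_def by linarith
      qed
      then have Aeq: "\<bar>g\<bar> * Q2 = - (g * Q2)" by simp
      define A where "A = \<bar>g\<bar> * Q2"
      have sub: "(\<lambda>(a,x). (x,a)) ` ?E \<subseteq> {(y,z). \<bar>y^2 - A\<bar> \<le> 4*h \<and> \<bar>y*z - W\<bar> \<le> 2*h}"
      proof safe
        fix a x assume "(a,x) \<in> ?E"
        note e = Emem[OF this]
        show "\<bar>x^2 - A\<bar> \<le> 4*h" using e Aeq unfolding A_def Q2_def by linarith
        show "\<bar>x*a - W\<bar> \<le> 2*h" using e by (simp add: mult.commute)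
      qed
      have inj: "inj_on (\<lambda>(a,x). (x,a)) ?E" by (auto simp: inj_on_def)
      have cardeq: "card ((\<lambda>(a,x). (x,a)) ` ?E) = card ?E" by (rule card_image[OF inj])
      have c: "real (card ((\<lambda>(a,x). (x,a)) ` ?E)) * real_of_int A \<le> 16 * real_of_int (4*h)^2 + 8 * real_of_int (2*h)^2 + 5 * real_of_int A"
        by (rule count2[OF sub]) (use big h1 in \<open>auto simp: A_def\<close>)
      have Ab: "real_of_int A \<le> 13 * real_of_int h^2" using bndQ unfolding A_def
        by (metis of_int_le_iff of_int_mult of_int_numeral of_int_power)
      have "max p q = q" using False by simp
      then have eqA: "\<bar>g\<bar> * (max p q)^2 = A" by (simp add: A_def Q2_def)
      have "real (card ?E) * real_of_int A \<le> 288 * (real H)^2 + 5 * real_of_int A"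
        using c realh cardeq by (simp add: power_mult_distrib)
      moreover have "0 \<le> (real H)^2" by simp
      moreover have "real_of_int A \<le> 13 * (real H)^2" using Ab realh by simp
      ultimately show ?thesis unfolding eqA by linarith
    qed
  qed
qed




lemma param:
  fixes u v w :: int
  assumes uv: "u * v = w^2" and w: "w \<noteq> 0"
  shows "\<exists>g p q. g \<noteq> 0 \<and> p > 0 \<and> q > 0 \<and> u = g*p^2 \<and> v = g*q^2 \<and> (w = g*p*q \<or> w = -(g*p*q))"
proof -
  define k where "k = gcd u w"
  have k0: "k > 0" using w by (simp add: k_def)
  obtain u' where u': "u = k*u'" unfolding k_def by (meson gcd_dvd1 dvdE)
  obtain w' where w': "w = k*w'" unfolding k_def by (meson gcd_dvd2 dvdE)
  have cop: "coprime u' w'"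
  proof -
    have "gcd u w = k * gcd u' w'" using u' w' k0 by (simp add: gcd_mult_left)
    then have "gcd u' w' = 1" using k0 unfolding k_def[symmetric] by simp
    then show ?thesis by (simp add: coprime_iff_gcd_eq_1)
  qed
  have u0: "u \<noteq> 0" using uv w by auto
  then have u'0: "u' \<noteq> 0" using u' by auto
  have w'0: "w' \<noteq> 0" using w w' by auto
  have "k*(u' * v) = k*(k*w'^2)" using uv u' w' by (simp add: power2_eq_square algebra_simps)
  then have e1: "u' * v = k*w'^2" using k0 by simp
  have "u' dvd k*w'^2" using e1 by (metis dvd_triv_left)
  moreover have "coprime u' (w'^2)" using cop by simp
  ultimately have "u' dvd k" using coprime_dvd_mult_left_iff by blast
  then obtain t where t: "k = u'*t" by (meson dvdE)
  have v: "v = t*w'^2" using e1 t u'0 by (simp add: algebra_simps)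
  have ueq: "u = t*u'^2" using u' t by (simp add: power2_eq_square algebra_simps)
  have weq: "w = t*u'*w'" using w' t by (simp add: algebra_simps)
  have t0: "t \<noteq> 0" using t k0 by auto
  show ?thesis
  proof (intro exI conjI)
    show "t \<noteq> 0" by (rule t0)
    show "\<bar>u'\<bar> > 0" using u'0 by simp
    show "\<bar>w'\<bar> > 0" using w'0 by simp
    show "u = t*\<bar>u'\<bar>^2" using ueq by simp
    show "v = t*\<bar>w'\<bar>^2" using v by simp
    show "w = t*\<bar>u'\<bar>*\<bar>w'\<bar> \<or> w = -(t*\<bar>u'\<bar>*\<bar>w'\<bar>)" using weq
      by (cases "u' \<ge> 0"; cases "w' \<ge> 0") (auto simp: abs_if algebra_simps)
  qed
qed


definition Tm :: "nat \<Rightarrow> real" where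
  "Tm M = (\<Sum>p\<in>{1..M}. \<Sum>q\<in>{1..M}. 1 / (real (max p q))^2)"

lemma Tm_le: "Tm M \<le> 2 * harm M"
proof (induction M)
  case 0 then show ?case by (simp add: Tm_def harm_def)
next
  case (Suc M)
  let ?f = "\<lambda>p q. 1 / (real (max p q))^2"
  have split: "{1..Suc M} = insert (Suc M) {1..M}" by auto
  have inner: "(\<Sum>q\<in>{1..Suc M}. ?f p q) = (\<Sum>q\<in>{1..M}. ?f p q) + ?f p (Suc M)" for p
    by (simp add: split add.commute)
  have "Tm (Suc M) = (\<Sum>p\<in>{1..Suc M}. (\<Sum>q\<in>{1..M}. ?f p q) + ?f p (Suc M))"
    unfolding Tm_def using inner by simp
  also have "\<dots> = (\<Sum>p\<in>{1..Suc M}. \<Sum>q\<in>{1..M}. ?f p q) + (\<Sum>p\<in>{1..Suc M}. ?f p (Suc M))"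
    by (rule sum.distrib)
  also have "(\<Sum>p\<in>{1..Suc M}. \<Sum>q\<in>{1..M}. ?f p q) = Tm M + (\<Sum>q\<in>{1..M}. ?f (Suc M) q)"
    unfolding Tm_def by (simp add: split add.commute)
  also have "(\<Sum>q\<in>{1..M}. ?f (Suc M) q) = (\<Sum>q\<in>{1..M}. 1 / (real (Suc M))^2)"
    by (intro sum.cong) (auto simp: max_def)
  also have "\<dots> = real M / (real (Suc M))^2" by simp
  also have "(\<Sum>p\<in>{1..Suc M}. ?f p (Suc M)) = (\<Sum>p\<in>{1..Suc M}. 1 / (real (Suc M))^2)"
    by (intro sum.cong) (auto simp: max_def)
  also have "\<dots> = real (Suc M) / (real (Suc M))^2" by simp
  finally have e: "Tm (Suc M) = Tm M + (real M / (real (Suc M))^2 + real (Suc M) / (real (Suc M))^2)" by simp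
  have "real M / (real (Suc M))^2 + real (Suc M) / (real (Suc M))^2 \<le> 2 / real (Suc M)"
  proof -
    have pos: "0 < real (Suc M)" by simp
    have "real M / (real (Suc M))^2 \<le> real (Suc M) / (real (Suc M))^2"
      by (intro divide_right_mono) auto
    moreover have "real (Suc M) / (real (Suc M))^2 = 1 / real (Suc M)" using pos by (simp add: power2_eq_square)
    ultimately show ?thesis by simp
  qed
  then have "Tm (Suc M) \<le> 2 * harm M + 2 / real (Suc M)" using e Suc.IH by linarith
  also have "\<dots> = 2 * harm (Suc M)" by (simp add: harm_Suc field_simps)
  finally show ?case .
qed

lemma harm_le_ln: assumes "1 \<le> n" shows "harm n \<le> ln (real n) + 1"
proof -
  have "harm n - ln (real n) \<le> harm 1 - ln (real (1::nat))"
    using euler_mascheroni_sequence_decreasing[of 1 n] assms by simp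
  also have "\<dots> = 1" by (simp add: harm_def)
  finally show ?thesis by simp
qed


definition Sol :: "nat \<Rightarrow> (int \<times> int \<times> int \<times> int \<times> int) set" where
  "Sol H = {t :: int \<times> int \<times> int \<times> int \<times> int.
      case t of (x, a, b, c, d) \<Rightarrow>
      \<bar>x\<bar> \<le> 2 * int H \<and> \<bar>a\<bar> \<le> int H \<and> \<bar>b\<bar> \<le> int H \<and> \<bar>c\<bar> \<le> int H \<and> \<bar>d\<bar> \<le> int H \<and>
      x^3 - b * x^2 + (a * c - 4 * d) * x - (a^2 * d - 4 * b * d + c^2) = 0}"

lemma R_Sol: "R H = card (Sol H)" by (simp add: R_def Sol_def)

lemma Sol_finite: "finite (Sol H)"
proof -
  have "Sol H \<subseteq> {-2*int H..2*int H} \<times> {-int H..int H} \<times> {-int H..int H} \<times> {-int H..int H} \<times> {-int H..int H}"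
    by (auto simp: Sol_def)
  then show ?thesis by (rule finite_subset) auto
qed

lemma key_identity:
  fixes x a b c d :: int
  shows "4 * (x^3 - b * x^2 + (a * c - 4 * d) * x - (a^2 * d - 4 * b * d + c^2))
     = (4*b - 4*x - a^2) * (4*d - x^2) - (a*x - 2*c)^2"
  by (simp add: power2_eq_square power3_eq_cube algebra_simps)

lemma Sol_eq:
  assumes "(x,a,b,c,d) \<in> Sol H"
  shows "(4*b - 4*x - a^2) * (4*d - x^2) = (a*x - 2*c)^2"
  using assms key_identity[of x b a c d] by (simp add: Sol_def)

definition Fset :: "nat \<Rightarrow> int \<Rightarrow> int \<Rightarrow> int \<Rightarrow> int \<Rightarrow> (int \<times> int \<times> int \<times> int \<times> int) set" where
  "Fset H g p q W = {t \<in> Sol H. case t of (x,a,b,c,d) \<Rightarrow>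
      a^2 = 4*b - 4*x - g*p^2 \<and> x^2 = 4*d - g*q^2 \<and> a*x - 2*c = W}"

lemma Eset_finite: "finite (Eset H g p q W)"
proof -
  have "Eset H g p q W \<subseteq> {-int H..int H} \<times> {-2*int H..2*int H}"
    by (auto simp: Eset_def)
  then show ?thesis by (rule finite_subset) auto
qed

lemma Fset_card: "card (Fset H g p q W) \<le> card (Eset H g p q W)"
proof (rule card_inj_on_le[where f = "\<lambda>(x,a,b,c,d). (a,x)"])
  show "inj_on (\<lambda>(x,a,b,c,d). (a,x)) (Fset H g p q W)"
  proof (rule inj_onI)
    fix s t assume s: "s \<in> Fset H g p q W" and t: "t \<in> Fset H g p q W"
      and eq: "(\<lambda>(x,a,b,c,d). (a,x)) s = (\<lambda>(x,a,b,c,d). (a,x)) t"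
    obtain x a b c d where sd: "s = (x,a,b,c,d)" by (cases s) auto
    obtain x' a' b' c' d' where td: "t = (x',a',b',c',d')" by (cases t) auto
    from eq have [simp]: "a' = a" "x' = x" by (auto simp: sd td)
    from s t have "4*b = 4*b'" "4*d = 4*d'" "2*c = 2*c'" by (auto simp: Fset_def sd td)
    then show "s = t" by (simp add: sd td)
  qed
  show "(\<lambda>(x,a,b,c,d). (a,x)) ` Fset H g p q W \<subseteq> Eset H g p q W"
  proof clarify
    fix x a b c d assume t: "(x,a,b,c,d) \<in> Fset H g p q W"
    then have s: "(x,a,b,c,d) \<in> Sol H" and e1: "a^2 = 4*b - 4*x - g*p^2" and e2: "x^2 = 4*d - g*q^2"
      and e3: "a*x - 2*c = W" by (auto simp: Fset_def)
    from s have bd: "\<bar>x\<bar> \<le> 2 * int H" "\<bar>a\<bar> \<le> int H" "\<bar>b\<bar> \<le> int H" "\<bar>c\<bar> \<le> int H" "\<bar>d\<bar> \<le> int H"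
      by (auto simp: Sol_def)
    have "a^2 + g*p^2 + 4*x = 4*b" using e1 by simp
    moreover have "x^2 + g*q^2 = 4*d" using e2 by simp
    moreover have "a*x - W = 2*c" using e3 by simp
    ultimately show "(a,x) \<in> Eset H g p q W" using bd by (simp add: Eset_def abs_mult)
  qed
  show "finite (Eset H g p q W)" by (rule Eset_finite)
qed

lemma Eset_param_bounds:
  assumes H: "1 \<le> H" and ax: "(a,x) \<in> Eset H g p q W"
  shows "\<bar>g\<bar> * p^2 \<le> 13 * (int H)^2" "\<bar>g\<bar> * q^2 \<le> 13 * (int H)^2"
proof -
  define h where "h = int H"
  have h1: "1 \<le> h" using H by (simp add: h_def)
  have hh: "h \<le> h^2" using h1 by (simp add: power2_eq_square)
  have e0: "\<bar>a^2 + g*p^2 + 4*x\<bar> \<le> 4*h" "\<bar>a\<bar> \<le> h" "\<bar>x\<bar> \<le> 2*h" "\<bar>x^2 + g*q^2\<bar> \<le> 4*h"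
    using ax by (auto simp: Eset_def h_def)
  have a0sq: "a^2 \<le> h^2" using e0 sq_le_of_abs_le by blast
  have "x^2 \<le> (2*h)^2" using e0 sq_le_of_abs_le by blast
  then have x0sq: "x^2 \<le> 4*h^2" by (simp add: power_mult_distrib)
  have a0: "0 \<le> a^2" "0 \<le> x^2" by simp_all
  show "\<bar>g\<bar> * p^2 \<le> 13 * (int H)^2"
  proof (cases "g > 0")
    case True
    then have "\<bar>g\<bar> * p^2 = g * p^2" by simp
    then show ?thesis using e0 a0sq hh a0 unfolding h_def[symmetric] by linarith
  next
    case False
    then have "\<bar>g\<bar> * p^2 = - (g * p^2)" by simp
    then show ?thesis using e0 a0sq hh unfolding h_def[symmetric] by linarith
  qed
  show "\<bar>g\<bar> * q^2 \<le> 13 * (int H)^2"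
  proof (cases "g > 0")
    case True
    then have "\<bar>g\<bar> * q^2 = g * q^2" by simp
    then show ?thesis using e0 hh a0 unfolding h_def[symmetric] by linarith
  next
    case False
    then have "\<bar>g\<bar> * q^2 = - (g * q^2)" by simp
    then show ?thesis using e0 hh x0sq unfolding h_def[symmetric] by linarith
  qed
qed




definition S1 :: "nat \<Rightarrow> (int \<times> int \<times> int \<times> int \<times> int) set" where
  "S1 H = {t \<in> Sol H. case t of (x,a,b,c,d) \<Rightarrow> a*x - 2*c \<noteq> 0}"

lemma Fset_Eset:
  assumes t: "(x,a,b,c,d) \<in> Fset H g p q W"
  shows "(a,x) \<in> Eset H g p q W"
proof -
  from t have s: "(x,a,b,c,d) \<in> Sol H" and e1: "a^2 = 4*b - 4*x - g*p^2" and e2: "x^2 = 4*d - g*q^2"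
    and e3: "a*x - 2*c = W" by (auto simp: Fset_def)
  from s have bd: "\<bar>x\<bar> \<le> 2 * int H" "\<bar>a\<bar> \<le> int H" "\<bar>b\<bar> \<le> int H" "\<bar>c\<bar> \<le> int H" "\<bar>d\<bar> \<le> int H"
    by (auto simp: Sol_def)
  have "a^2 + g*p^2 + 4*x = 4*b" using e1 by simp
  moreover have "x^2 + g*q^2 = 4*d" using e2 by simp
  moreover have "a*x - W = 2*c" using e3 by simp
  ultimately show "(a,x) \<in> Eset H g p q W" using bd by (simp add: Eset_def abs_mult)
qed

lemma S1_cover:
  assumes H: "1 \<le> H"
  shows "S1 H \<subseteq> (\<Union>G\<in>{1..13*H^2}. \<Union>p\<in>{1..13*H^2}. \<Union>q\<in>{1..13*H^2}. \<Union>\<sigma>\<in>{-1,1::int}. \<Union>s\<in>{-1,1::int}.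
            Fset H (\<sigma> * int G) (int p) (int q) (s * (\<sigma> * int G) * int p * int q))"
proof
  fix t assume t: "t \<in> S1 H"
  obtain x a b c d where td: "t = (x,a,b,c,d)" by (cases t) auto
  have sol: "(x,a,b,c,d) \<in> Sol H" and w0: "a*x - 2*c \<noteq> 0" using t by (auto simp: S1_def td)
  have uv: "(4*b - 4*x - a^2) * (4*d - x^2) = (a*x - 2*c)^2" by (rule Sol_eq[OF sol])
  from param[OF uv w0] obtain g p q where gpq: "g \<noteq> 0" "p > 0" "q > 0"
    "4*b - 4*x - a^2 = g*p^2" "4*d - x^2 = g*q^2" "a*x - 2*c = g*p*q \<or> a*x - 2*c = -(g*p*q)"
    by blast
  obtain s :: int where s: "s \<in> {-1,1}" "a*x - 2*c = s * g * p * q"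
    using gpq(6) by (metis insertCI mult_minus_left mult_1 mult.assoc)
  define W where "W = a*x - 2*c"
  have inF: "(x,a,b,c,d) \<in> Fset H g p q W" using sol gpq s unfolding Fset_def W_def by auto
  have inE: "(a,x) \<in> Eset H g p q W" by (rule Fset_Eset[OF inF])
  note bnds = Eset_param_bounds[OF H inE]
  have p2: "1 \<le> p^2" "1 \<le> q^2" using gpq by (simp_all add: one_le_power)
  have g1: "1 \<le> \<bar>g\<bar>" using gpq by linarith
  have "\<bar>g\<bar> * 1 \<le> \<bar>g\<bar> * p^2" using p2 by (intro mult_left_mono) auto
  then have gb: "\<bar>g\<bar> \<le> 13 * (int H)^2" using bnds by linarith
  have "p \<le> p^2" using gpq by (simp add: power2_eq_square)
  moreover have "1 * p^2 \<le> \<bar>g\<bar> * p^2" using g1 by (intro mult_right_mono) auto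
  ultimately have pb: "p \<le> 13 * (int H)^2" using bnds by linarith
  have "q \<le> q^2" using gpq by (simp add: power2_eq_square)
  moreover have "1 * q^2 \<le> \<bar>g\<bar> * q^2" using g1 by (intro mult_right_mono) auto
  ultimately have qb: "q \<le> 13 * (int H)^2" using bnds by linarith
  define G where "G = nat \<bar>g\<bar>"
  define \<sigma> where "\<sigma> = sgn g"
  have geq: "\<sigma> * int G = g" unfolding G_def \<sigma>_def by (simp add: sgn_mult_abs)
  have \<sigma>in: "\<sigma> \<in> {-1,1}" unfolding \<sigma>_def using gpq by (auto simp: sgn_if)
  have Gin: "G \<in> {1..13*H^2}" unfolding G_def using g1 gb by (auto simp: nat_le_iff)
  have pin: "nat p \<in> {1..13*H^2}" using gpq pb by (auto simp: nat_le_iff)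
  have qin: "nat q \<in> {1..13*H^2}" using gpq qb by (auto simp: nat_le_iff)
  have Weq: "W = s * (\<sigma> * int G) * int (nat p) * int (nat q)" using s gpq geq by (simp add: W_def)
  have "t \<in> Fset H (\<sigma> * int G) (int (nat p)) (int (nat q)) (s * (\<sigma> * int G) * int (nat p) * int (nat q))"
    using inF gpq geq Weq td by simp
  then show "t \<in> (\<Union>G\<in>{1..13*H^2}. \<Union>p\<in>{1..13*H^2}. \<Union>q\<in>{1..13*H^2}. \<Union>\<sigma>\<in>{-1,1::int}. \<Union>s\<in>{-1,1::int}.
            Fset H (\<sigma> * int G) (int p) (int q) (s * (\<sigma> * int G) * int p * int q))"
    using Gin pin qin \<sigma>in s(1) by blast
qed


lemma card_UN_real: "finite I \<Longrightarrow> real (card (\<Union>i\<in>I. A i)) \<le> (\<Sum>i\<in>I. real (card (A i)))"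
  using card_UN_le[of I A] by (metis of_nat_le_iff of_nat_sum)

lemma Fset_bound:
  assumes H: "1 \<le> H" and G: "1 \<le> G" and p: "1 \<le> p" and q: "1 \<le> q" and \<sigma>: "\<sigma> \<in> {-1,1::int}"
  shows "real (card (Fset H (\<sigma> * int G) (int p) (int q) W)) \<le> 6960 * (real H)^2 / (real G * (real (max p q))^2)"
proof -
  have g0: "\<sigma> * int G \<noteq> 0" using \<sigma> G by auto
  have eb: "real (card (Eset H (\<sigma> * int G) (int p) (int q) W)) * real_of_int (\<bar>\<sigma> * int G\<bar> * (max (int p) (int q))^2) \<le> 6960 * (real H)^2"
    by (rule Eset_bound) (use H g0 p q in auto)
  have ab: "\<bar>\<sigma> * int G\<bar> = int G" using \<sigma> by (auto simp: abs_mult)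
  have mx: "max (int p) (int q) = int (max p q)" by simp
  have re: "real_of_int (\<bar>\<sigma> * int G\<bar> * (max (int p) (int q))^2) = real G * (real (max p q))^2"
    unfolding ab mx by simp
  have pos: "0 < real G * (real (max p q))^2" using G p by simp
  have "real (card (Fset H (\<sigma> * int G) (int p) (int q) W)) \<le> real (card (Eset H (\<sigma> * int G) (int p) (int q) W))"
    using Fset_card by simp
  then have "real (card (Fset H (\<sigma> * int G) (int p) (int q) W)) * (real G * (real (max p q))^2) \<le> 6960 * (real H)^2"
    using eb re pos by (smt (verit) mult_right_mono)
  then show ?thesis using pos by (simp add: pos_le_divide_eq)
qed

lemma card_S1:
  assumes H: "1 \<le> H"
  shows "real (card (S1 H)) \<le> 4 * 6960 * (real H)^2 * harm (13*H^2) * Tm (13*H^2)"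
proof -
  define M where "M = 13*H^2"
  define F where "F = (\<lambda>G p q \<sigma> s. Fset H (\<sigma> * int G) (int p) (int q) (s * (\<sigma> * int G) * int p * int q))"
  define K where "K = 6960 * (real H)^2"
  have finF: "finite (F G p q \<sigma> s)" for G p q \<sigma> s
    using Sol_finite by (rule finite_subset[rotated]) (auto simp: F_def Fset_def)
  have "S1 H \<subseteq> (\<Union>G\<in>{1..M}. \<Union>p\<in>{1..M}. \<Union>q\<in>{1..M}. \<Union>\<sigma>\<in>{-1,1::int}. \<Union>s\<in>{-1,1::int}. F G p q \<sigma> s)"
    using S1_cover[OF H] by (simp add: M_def F_def)
  then have "real (card (S1 H)) \<le> real (card (\<Union>G\<in>{1..M}. \<Union>p\<in>{1..M}. \<Union>q\<in>{1..M}. \<Union>\<sigma>\<in>{-1,1::int}. \<Union>s\<in>{-1,1::int}. F G p q \<sigma> s))"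
    using finF by (intro of_nat_mono card_mono) auto
  also have "\<dots> \<le> (\<Sum>G\<in>{1..M}. real (card (\<Union>p\<in>{1..M}. \<Union>q\<in>{1..M}. \<Union>\<sigma>\<in>{-1,1::int}. \<Union>s\<in>{-1,1::int}. F G p q \<sigma> s)))"
    by (rule card_UN_real) simp
  also have "\<dots> \<le> (\<Sum>G\<in>{1..M}. \<Sum>p\<in>{1..M}. real (card (\<Union>q\<in>{1..M}. \<Union>\<sigma>\<in>{-1,1::int}. \<Union>s\<in>{-1,1::int}. F G p q \<sigma> s)))"
    by (intro sum_mono card_UN_real) simp
  also have "\<dots> \<le> (\<Sum>G\<in>{1..M}. \<Sum>p\<in>{1..M}. \<Sum>q\<in>{1..M}. real (card (\<Union>\<sigma>\<in>{-1,1::int}. \<Union>s\<in>{-1,1::int}. F G p q \<sigma> s)))"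
    by (intro sum_mono card_UN_real) simp
  also have "\<dots> \<le> (\<Sum>G\<in>{1..M}. \<Sum>p\<in>{1..M}. \<Sum>q\<in>{1..M}. \<Sum>\<sigma>\<in>{-1,1::int}. real (card (\<Union>s\<in>{-1,1::int}. F G p q \<sigma> s)))"
    by (intro sum_mono card_UN_real) simp
  also have "\<dots> \<le> (\<Sum>G\<in>{1..M}. \<Sum>p\<in>{1..M}. \<Sum>q\<in>{1..M}. \<Sum>\<sigma>\<in>{-1,1::int}. \<Sum>s\<in>{-1,1::int}. real (card (F G p q \<sigma> s)))"
    by (intro sum_mono card_UN_real) simp
  also have "\<dots> \<le> (\<Sum>G\<in>{1..M}. \<Sum>p\<in>{1..M}. \<Sum>q\<in>{1..M}. \<Sum>\<sigma>\<in>{-1,1::int}. \<Sum>s\<in>{-1,1::int}. K / (real G * (real (max p q))^2))"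
    unfolding F_def K_def by (intro sum_mono Fset_bound[OF H]) auto
  also have "\<dots> = (\<Sum>G\<in>{1..M}. \<Sum>p\<in>{1..M}. \<Sum>q\<in>{1..M}. (4 * K / real G) * (1 / (real (max p q))^2))"
    by simp
  also have "\<dots> = (\<Sum>G\<in>{1..M}. (4 * K / real G) * Tm M)"
    by (simp add: Tm_def sum_distrib_left)
  also have "\<dots> = 4 * K * Tm M * harm M"
    by (simp add: harm_def sum_distrib_left sum_distrib_right divide_inverse mult.commute mult.left_commute)
  finally show ?thesis by (simp add: K_def M_def mult.commute mult.left_commute)
qed


definition Pxa :: "nat \<Rightarrow> (int \<times> int) set" where
  "Pxa H = {(x,a). \<bar>x\<bar> \<le> 2*int H \<and> \<bar>a\<bar> \<le> int H \<and> \<bar>a*x\<bar> \<le> 2*int H}"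
definition S0a :: "nat \<Rightarrow> (int \<times> int \<times> int \<times> int \<times> int) set" where
  "S0a H = {t \<in> Sol H. case t of (x,a,b,c,d) \<Rightarrow> a*x - 2*c = 0 \<and> 4*b - 4*x - a^2 = 0}"
definition S0b :: "nat \<Rightarrow> (int \<times> int \<times> int \<times> int \<times> int) set" where
  "S0b H = {t \<in> Sol H. case t of (x,a,b,c,d) \<Rightarrow> a*x - 2*c = 0 \<and> 4*d - x^2 = 0}"

lemma Sol_split: "Sol H \<subseteq> S0a H \<union> S0b H \<union> S1 H"
proof
  fix t assume t: "t \<in> Sol H"
  obtain x a b c d where td: "t = (x,a,b,c,d)" by (cases t) auto
  have sol: "(x,a,b,c,d) \<in> Sol H" using t td by simp
  have uv: "(4*b - 4*x - a^2) * (4*d - x^2) = (a*x - 2*c)^2" by (rule Sol_eq[OF sol])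
  show "t \<in> S0a H \<union> S0b H \<union> S1 H"
  proof (cases "a*x - 2*c = 0")
    case True
    then have "(4*b - 4*x - a^2) * (4*d - x^2) = 0" using uv by simp
    then have "4*b - 4*x - a^2 = 0 \<or> 4*d - x^2 = 0" by simp
    then show ?thesis using True sol td by (auto simp: S0a_def S0b_def)
  next
    case False
    then show ?thesis using sol td by (auto simp: S1_def)
  qed
qed

lemma Pxa_finite: "finite (Pxa H)"
proof -
  have "Pxa H \<subseteq> {-2*int H..2*int H} \<times> {-int H..int H}" by (auto simp: Pxa_def)
  then show ?thesis by (rule finite_subset) auto
qed

lemma card_sym_int: "card {-int H..int H} = 2*H+1"
proof -
  have "int H - - int H + 1 = int (2*H+1)" by simp
  then show ?thesis by (simp only: card_atLeastAtMost_int nat_int)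
qed

lemma card_S0a: "card (S0a H) \<le> card (Pxa H) * (2*H+1)"
proof -
  have "card (S0a H) \<le> card (Pxa H \<times> {-int H..int H})"
  proof (rule card_inj_on_le[where f = "\<lambda>(x,a,b,c,d). ((x,a),d)"])
    show "inj_on (\<lambda>(x,a,b,c,d). ((x,a),d)) (S0a H)"
    proof (rule inj_onI)
      fix s t assume s: "s \<in> S0a H" and t: "t \<in> S0a H"
        and eq: "(\<lambda>(x,a,b,c,d). ((x,a),d)) s = (\<lambda>(x,a,b,c,d). ((x,a),d)) t"
      obtain x a b c d where sd: "s = (x,a,b,c,d)" by (cases s) auto
      obtain x' a' b' c' d' where td: "t = (x',a',b',c',d')" by (cases t) auto
      from eq have [simp]: "a' = a" "x' = x" "d' = d" by (auto simp: sd td)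
      from s t have "4*b = 4*b'" "2*c = 2*c'" by (auto simp: S0a_def sd td)
      then show "s = t" by (simp add: sd td)
    qed
    show "(\<lambda>(x,a,b,c,d). ((x,a),d)) ` S0a H \<subseteq> Pxa H \<times> {-int H..int H}"
    proof
      fix y assume "y \<in> (\<lambda>(x,a,b,c,d). ((x,a),d)) ` S0a H"
      then obtain x a b c d where xin: "(x,a,b,c,d) \<in> S0a H" and yd: "y = ((x,a),d)" by auto
      from xin have "\<bar>x\<bar> \<le> 2 * int H" "\<bar>a\<bar> \<le> int H" "\<bar>c\<bar> \<le> int H" "\<bar>d\<bar> \<le> int H" "a*x = 2*c"
        by (auto simp: S0a_def Sol_def)
      then show "y \<in> Pxa H \<times> {-int H..int H}" unfolding yd by (auto simp: Pxa_def abs_mult)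
    qed
    show "finite (Pxa H \<times> {-int H..int H})" using Pxa_finite by simp
  qed
  also have "\<dots> = card (Pxa H) * (2*H+1)" by (simp only: card_cartesian_product card_sym_int)
  finally show ?thesis .
qed

lemma card_S0b: "card (S0b H) \<le> card (Pxa H) * (2*H+1)"
proof -
  have "card (S0b H) \<le> card (Pxa H \<times> {-int H..int H})"
  proof (rule card_inj_on_le[where f = "\<lambda>(x,a,b,c,d). ((x,a),b)"])
    show "inj_on (\<lambda>(x,a,b,c,d). ((x,a),b)) (S0b H)"
    proof (rule inj_onI)
      fix s t assume s: "s \<in> S0b H" and t: "t \<in> S0b H"
        and eq: "(\<lambda>(x,a,b,c,d). ((x,a),b)) s = (\<lambda>(x,a,b,c,d). ((x,a),b)) t"
      obtain x a b c d where sd: "s = (x,a,b,c,d)" by (cases s) auto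
      obtain x' a' b' c' d' where td: "t = (x',a',b',c',d')" by (cases t) auto
      from eq have [simp]: "a' = a" "x' = x" "b' = b" by (auto simp: sd td)
      from s t have "4*d = 4*d'" "2*c = 2*c'" by (auto simp: S0b_def sd td)
      then show "s = t" by (simp add: sd td)
    qed
    show "(\<lambda>(x,a,b,c,d). ((x,a),b)) ` S0b H \<subseteq> Pxa H \<times> {-int H..int H}"
    proof
      fix y assume "y \<in> (\<lambda>(x,a,b,c,d). ((x,a),b)) ` S0b H"
      then obtain x a b c d where xin: "(x,a,b,c,d) \<in> S0b H" and yd: "y = ((x,a),b)" by auto
      from xin have "\<bar>x\<bar> \<le> 2 * int H" "\<bar>a\<bar> \<le> int H" "\<bar>c\<bar> \<le> int H" "\<bar>b\<bar> \<le> int H" "a*x = 2*c"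
        by (auto simp: S0b_def Sol_def)
      then show "y \<in> Pxa H \<times> {-int H..int H}" unfolding yd by (auto simp: Pxa_def abs_mult)
    qed
    show "finite (Pxa H \<times> {-int H..int H})" using Pxa_finite by simp
  qed
  also have "\<dots> = card (Pxa H) * (2*H+1)" by (simp only: card_cartesian_product card_sym_int)
  finally show ?thesis .
qed

definition Aset :: "nat \<Rightarrow> nat \<Rightarrow> int set" where
  "Aset H n = {a. \<bar>a\<bar> \<le> int H \<and> \<bar>a\<bar> * int n \<le> 2 * int H}"

lemma Aset_finite: "finite (Aset H n)"
proof -
  have "Aset H n \<subseteq> {-int H..int H}" by (auto simp: Aset_def)
  then show ?thesis by (rule finite_subset) auto
qed

lemma card_Aset0: "real (card (Aset H n)) \<le> 2 * real H + 1"
proof -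
  have "Aset H n \<subseteq> {-int H..int H}" by (auto simp: Aset_def)
  then have "card (Aset H n) \<le> card {-int H..int H}" by (intro card_mono) auto
  also have "\<dots> = 2*H+1" by (rule card_sym_int)
  finally have "real (card (Aset H n)) \<le> real (2*H+1)" by (rule of_nat_mono)
  then show ?thesis by simp
qed

lemma card_Aset:
  assumes n: "1 \<le> n"
  shows "real (card (Aset H n)) \<le> 4 * real H / real n + 1"
proof -
  define k where "k = \<lfloor>2 * real H / real n\<rfloor>"
  have npos: "0 < real n" using n by simp
  have k0: "0 \<le> k" unfolding k_def using npos by simp
  have sub: "Aset H n \<subseteq> {-k..k}"
  proof
    fix a assume "a \<in> Aset H n"
    then have "\<bar>a\<bar> * int n \<le> 2 * int H" by (simp add: Aset_def)
    then have "real_of_int (\<bar>a\<bar> * int n) \<le> real_of_int (2 * int H)" by (simp only: of_int_le_iff)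
    then have "real_of_int \<bar>a\<bar> * real n \<le> 2 * real H" by simp
    then have "real_of_int \<bar>a\<bar> \<le> 2 * real H / real n" using npos by (simp add: pos_le_divide_eq)
    then have "\<bar>a\<bar> \<le> k" unfolding k_def by (simp add: le_floor_iff)
    then show "a \<in> {-k..k}" by auto
  qed
  then have "card (Aset H n) \<le> card {-k..k}" by (intro card_mono) auto
  also have "\<dots> = nat (2*k + 1)" by simp
  finally have "real (card (Aset H n)) \<le> real (nat (2*k + 1))" by (rule of_nat_mono)
  also have "\<dots> = real_of_int (2*k + 1)" using k0 by (intro of_nat_nat) simp
  also have "\<dots> \<le> 2 * (2 * real H / real n) + 1"
    using of_int_floor_le[of "2 * real H / real n"] unfolding k_def by linarith
  also have "\<dots> = 4 * real H / real n + 1" by simp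
  finally show ?thesis .
qed





lemma Pxa_cover: "Pxa H \<subseteq> (\<Union>n\<in>{0..2*H}. \<Union>\<sigma>\<in>{-1,1::int}. {\<sigma> * int n} \<times> Aset H n)"
proof
  fix y assume y: "y \<in> Pxa H"
  obtain x a where yd: "y = (x,a)" by (cases y) auto
  from y have b: "\<bar>x\<bar> \<le> 2*int H" "\<bar>a\<bar> \<le> int H" "\<bar>a*x\<bar> \<le> 2*int H" by (auto simp: Pxa_def yd)
  define n where "n = nat \<bar>x\<bar>"
  define \<sigma> :: int where "\<sigma> = (if x \<ge> 0 then 1 else -1)"
  have nin: "n \<in> {0..2*H}" using b by (auto simp: n_def nat_le_iff)
  have xeq: "x = \<sigma> * int n" by (auto simp: n_def \<sigma>_def)
  have ain: "a \<in> Aset H n" using b by (auto simp: Aset_def n_def abs_mult)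
  have "\<sigma> \<in> {-1,1}" by (simp add: \<sigma>_def)
  then show "y \<in> (\<Union>n\<in>{0..2*H}. \<Union>\<sigma>\<in>{-1,1::int}. {\<sigma> * int n} \<times> Aset H n)"
    using nin xeq ain yd by blast
qed

lemma card_Pxa:
  assumes H: "1 \<le> H"
  shows "real (card (Pxa H)) \<le> 8 * real H + 2 + 8 * real H * harm (2*H)"
proof -
  have finA: "finite ({\<sigma> * int n} \<times> Aset H n)" for \<sigma> n using Aset_finite by simp
  have "real (card (Pxa H)) \<le> real (card (\<Union>n\<in>{0..2*H}. \<Union>\<sigma>\<in>{-1,1::int}. {\<sigma> * int n} \<times> Aset H n))"
    using Pxa_cover Aset_finite by (intro of_nat_mono card_mono) auto
  also have "\<dots> \<le> (\<Sum>n\<in>{0..2*H}. real (card (\<Union>\<sigma>\<in>{-1,1::int}. {\<sigma> * int n} \<times> Aset H n)))"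
    by (rule card_UN_real) simp
  also have "\<dots> \<le> (\<Sum>n\<in>{0..2*H}. \<Sum>\<sigma>\<in>{-1,1::int}. real (card ({\<sigma> * int n} \<times> Aset H n)))"
    by (intro sum_mono card_UN_real) simp
  also have "\<dots> = (\<Sum>n\<in>{0..2*H}. 2 * real (card (Aset H n)))"
    by (simp add: card_cartesian_product)
  also have "\<dots> = 2 * real (card (Aset H 0)) + (\<Sum>n\<in>{1..2*H}. 2 * real (card (Aset H n)))"
    by (subst sum.atLeast_Suc_atMost) auto
  also have "\<dots> \<le> 2 * (2 * real H + 1) + (\<Sum>n\<in>{1..2*H}. 2 * (4 * real H / real n + 1))"
  proof (intro add_mono sum_mono)
    show "2 * real (card (Aset H 0)) \<le> 2 * (2 * real H + 1)" using card_Aset0[of H 0] by simp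
    fix n assume "n \<in> {1..2*H}"
    then show "2 * real (card (Aset H n)) \<le> 2 * (4 * real H / real n + 1)" using card_Aset[of n H] by simp
  qed
  also have "(\<Sum>n\<in>{1..2*H}. 2 * (4 * real H / real n + 1)) = 8 * real H * harm (2*H) + 4 * real H"
  proof -
    have "(\<Sum>n\<in>{1..2*H}. 2 * (4 * real H / real n + 1)) = (\<Sum>n\<in>{1..2*H}. 8 * real H * inverse (real n) + 2)"
      by (intro sum.cong) (auto simp: field_simps)
    also have "\<dots> = 8 * real H * harm (2*H) + 4 * real H"
      by (simp add: sum.distrib harm_def sum_distrib_left)
    finally show ?thesis .
  qed
  finally show ?thesis by simp
qed


lemma R_bound:
  assumes H3: "3 \<le> H"
  shows "real (R H) \<le> 13000000 * ((real H)^2 * (ln (real H))^2)"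
proof -
  have H: "1 \<le> H" using H3 by simp
  define L where "L = ln (real H)"
  define M where "M = 13*H^2"
  have L1: "1 \<le> L"
  proof -
    have "exp 1 \<le> real H" using exp_le H3 by linarith
    then have "ln (exp 1) \<le> ln (real H)" using H by (subst ln_le_cancel_iff) auto
    then show ?thesis by (simp add: L_def)
  qed
  have Hr: "1 \<le> real H" using H by simp
  have M1: "1 \<le> M" using H by (simp add: M_def)
  have lnM: "ln (real M) \<le> 12 + 2 * L"
  proof -
    have "real M = 13 * (real H)^2" by (simp add: M_def)
    then have "ln (real M) = ln 13 + 2 * L" using Hr by (simp add: ln_mult ln_realpow L_def)
    moreover have "ln (13::real) \<le> 13 - 1" by (rule ln_le_minus_one) simp
    ultimately show ?thesis by simp
  qed
  define X :: real where "X = harm M"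
  have X0: "0 \<le> X" by (simp add: X_def harm_nonneg)
  have Xb: "X \<le> 15 * L" using harm_le_ln[OF M1] lnM L1 by (simp add: X_def)
  define Y :: real where "Y = harm (2*H)"
  have Y0: "0 \<le> Y" by (simp add: Y_def harm_nonneg)
  have Yb: "Y \<le> 3 * L"
  proof -
    have "harm (2*H) \<le> ln (real (2*H)) + 1" using H by (intro harm_le_ln) simp
    moreover have "ln (real (2*H)) = ln 2 + L" using Hr by (simp add: ln_mult L_def)
    moreover have "ln (2::real) \<le> 2 - 1" by (rule ln_le_minus_one) simp
    ultimately show ?thesis using L1 by (simp add: Y_def)
  qed
  have cP: "real (card (Pxa H)) \<le> 34 * real H * L"
  proof -
    have "8 * real H * Y \<le> 8 * real H * (3 * L)" using Yb Hr by (intro mult_left_mono) auto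
    moreover have "10 * real H * 1 \<le> 10 * real H * L" using L1 Hr by (intro mult_left_mono) auto
    ultimately show ?thesis using card_Pxa[OF H] Hr unfolding Y_def by linarith
  qed
  have S0: "real (card (S0a H)) + real (card (S0b H)) \<le> 204 * ((real H)^2 * L^2)"
  proof -
    have a: "real (card (S0a H)) \<le> real (card (Pxa H)) * (2 * real H + 1)"
      using of_nat_mono[OF card_S0a[of H], where ?'a = real] by (simp add: algebra_simps)
    have b: "real (card (S0b H)) \<le> real (card (Pxa H)) * (2 * real H + 1)"
      using of_nat_mono[OF card_S0b[of H], where ?'a = real] by (simp add: algebra_simps)
    have "real (card (Pxa H)) * (2 * real H + 1) \<le> (34 * real H * L) * (3 * real H)"
      using cP Hr L1 by (intro mult_mono) auto
    also have "\<dots> = 102 * ((real H)^2 * L)" by (simp add: power2_eq_square)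
    also have "\<dots> \<le> 102 * ((real H)^2 * L^2)"
    proof -
      have "L * 1 \<le> L * L" using L1 by (intro mult_left_mono) auto
      then have "L \<le> L^2" by (simp add: power2_eq_square)
      then show ?thesis by (intro mult_left_mono) auto
    qed
    finally show ?thesis using a b by linarith
  qed
  have S1b: "real (card (S1 H)) \<le> 12528000 * ((real H)^2 * L^2)"
  proof -
    have "real (card (S1 H)) \<le> 4 * 6960 * (real H)^2 * X * Tm M"
      using card_S1[OF H] by (simp add: X_def M_def)
    also have "\<dots> \<le> 4 * 6960 * (real H)^2 * X * (2 * X)"
      using Tm_le[of M] X0 by (intro mult_left_mono) (auto simp: X_def)
    also have "\<dots> = 55680 * (real H)^2 * X^2" by (simp add: power2_eq_square)
    also have "\<dots> \<le> 55680 * (real H)^2 * (15 * L)^2"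
      using Xb X0 by (intro mult_left_mono power_mono) auto
    also have "\<dots> = 12528000 * ((real H)^2 * L^2)" by (simp add: power2_eq_square)
    finally show ?thesis .
  qed
  have "card (Sol H) \<le> card (S0a H \<union> S0b H \<union> S1 H)"
    using Sol_split Sol_finite by (intro card_mono) (auto simp: S0a_def S0b_def S1_def)
  also have "\<dots> \<le> card (S0a H \<union> S0b H) + card (S1 H)" by (rule card_Un_le)
  also have "\<dots> \<le> card (S0a H) + card (S0b H) + card (S1 H)"
    using card_Un_le[of "S0a H" "S0b H"] by simp
  finally have "real (R H) \<le> real (card (S0a H) + card (S0b H) + card (S1 H))"
    unfolding R_Sol by (rule of_nat_mono)
  then have "real (R H) \<le> real (card (S0a H)) + real (card (S0b H)) + real (card (S1 H))"
    by simp
  also have "\<dots> \<le> 204 * ((real H)^2 * L^2) + 12528000 * ((real H)^2 * L^2)" using S0 S1b by linarith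
  also have "\<dots> \<le> 13000000 * ((real H)^2 * L^2)"
  proof -
    have "0 \<le> (real H)^2 * L^2" by simp
    then show ?thesis by linarith
  qed
  finally show ?thesis by (simp add: L_def)
qed

theorem proposition3p1:
  shows "(\<lambda>H. real (R H)) \<in> O(\<lambda>H. real H ^ 2 * (ln (real H)) ^ 2)"
proof (rule bigoI[where c = 13000000])
  show "\<forall>\<^sub>F H in at_top. norm (real (R H)) \<le> 13000000 * norm (real H ^ 2 * (ln (real H)) ^ 2)"
    using eventually_ge_at_top[of "3::nat"]
  proof eventually_elim
    case (elim H)
    have "norm (real (R H)) = real (R H)" by simp
    moreover have "norm (real H ^ 2 * (ln (real H)) ^ 2) = real H ^ 2 * (ln (real H)) ^ 2" by simp
    ultimately show ?case using R_bound[OF elim] by simp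
  qed
qed


end
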